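(* Let $T>0$ and let $\theta$ be a strictly positive adapted process on $[0,T]$ that is a.s. Riemann integrable with $\inf_{0\le t\le T}\theta(t)>0$ a.s. Define $\tau^n_0=0$, $\tau^n_{k+1}=\big(\tau^n_k+\frac{1}{n\theta(\tau^n_k)}\big)\wedge T$, and $N_n=\max\{k:\tau^n_k<T\}$. Then $$\lim_{n\to\infty}\frac{N_n}{n}=\int_0^T\theta(t)\,dt\quad\text{a.s.}$$ If, in addition, $\mathbb{E}\big[\sup_{0\le t\le T}\theta(t)\big]<\infty$, then $$\lim_{n\to\infty}\mathbb{E}\frac{N_n}{n}=\int_0^T\mathbb{E}\theta(t)\,dt.$$ *)

theory Defs
  imports "HOL-Probability.Probability"
begin

text \<open>Riemann integrability on a compact interval: Riemann sums over tagged divisions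
  converge as the mesh (a constant gauge) tends to zero.\<close>
definition riemann_integrable_on :: "(real \<Rightarrow> real) \<Rightarrow> real \<Rightarrow> real \<Rightarrow> bool" where
  "riemann_integrable_on f a b \<longleftrightarrow>
     (\<exists>I. \<forall>e>0. \<exists>\<delta>>0. \<forall>D. D tagged_division_of {a..b} \<and> (\<lambda>x. ball x \<delta>) fine D \<longrightarrow>
        \<bar>(\<Sum>(x,K)\<in>D. Henstock_Kurzweil_Integration.content K * f x) - I\<bar> < e)"

definition adapted_on :: "real \<Rightarrow> (real \<Rightarrow> 'a measure) \<Rightarrow> (real \<Rightarrow> 'a \<Rightarrow> real) \<Rightarrow> bool" where
  "adapted_on T F X \<longleftrightarrow> (\<forall>t\<in>{0..T}. (\<lambda>\<omega>. X t \<omega>) \<in> borel_measurable (F t))"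

fun tau :: "real \<Rightarrow> (real \<Rightarrow> 'a \<Rightarrow> real) \<Rightarrow> nat \<Rightarrow> 'a \<Rightarrow> nat \<Rightarrow> real" where
  "tau T \<theta> n \<omega> 0 = 0"
| "tau T \<theta> n \<omega> (Suc k) =
     min (tau T \<theta> n \<omega> k + 1 / (real n * \<theta> (tau T \<theta> n \<omega> k) \<omega>)) T"

definition Ncount :: "real \<Rightarrow> (real \<Rightarrow> 'a \<Rightarrow> real) \<Rightarrow> nat \<Rightarrow> 'a \<Rightarrow> nat" where
  "Ncount T \<theta> n \<omega> = Max {k. tau T \<theta> n \<omega> k < T}"

end

theory Submission
  imports Defs
begin


lemma mono_steps:
  fixes p :: "nat \<Rightarrow> real"
  assumes "\<And>j. j < m \<Longrightarrow> p j < p (Suc j)"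
  shows "i \<le> k \<Longrightarrow> k \<le> m \<Longrightarrow> p i \<le> p k"
proof (induction k)
  case 0 then show ?case by simp
next
  case (Suc k)
  show ?case
  proof (cases "i = Suc k")
    case False
    then have "p i \<le> p k" using Suc by auto
    also have "p k \<le> p (Suc k)" using assms[of k] Suc by auto
    finally show ?thesis .
  qed simp
qed

lemma div_lemma:
  fixes p x :: "nat \<Rightarrow> real" and f :: "real \<Rightarrow> real"
  assumes "\<And>j. j < m \<Longrightarrow> p j < p (Suc j)"
    and "\<And>j. j < m \<Longrightarrow> x j \<in> {p j..p (Suc j)}"
    and "0 < m"
  shows "((\<lambda>j. (x j, {p j..p (Suc j)})) ` {..<m}) tagged_division_of {p 0..p m}
     \<and> (\<Sum>(y,K)\<in>((\<lambda>j. (x j, {p j..p (Suc j)})) ` {..<m}). Henstock_Kurzweil_Integration.content K * f y)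
        = (\<Sum>j<m. (p (Suc j) - p j) * f (x j))"
  using assms
proof (induction m)
  case 0 then show ?case by simp
next
  case (Suc m)
  show ?case
  proof (cases "m = 0")
    case True
    have "x 0 \<in> {p 0..p (Suc 0)}" using Suc by auto
    then show ?thesis using True Suc(2)[of 0]
      by (auto simp: lessThan_Suc tagged_division_of_self_real)
  next
    case False
    have IH: "((\<lambda>j. (x j, {p j..p (Suc j)})) ` {..<m}) tagged_division_of {p 0..p m}
     \<and> (\<Sum>(y,K)\<in>((\<lambda>j. (x j, {p j..p (Suc j)})) ` {..<m}). Henstock_Kurzweil_Integration.content K * f y)
        = (\<Sum>j<m. (p (Suc j) - p j) * f (x j))"
      using Suc False by auto
    have mono: "\<And>i k. i \<le> k \<Longrightarrow> k \<le> Suc m \<Longrightarrow> p i \<le> p k"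
      using mono_steps[of "Suc m" p] Suc(2) by blast
    have lt: "p m < p (Suc m)" using Suc(2) by auto
    have eqs: "(\<lambda>j. (x j, {p j..p (Suc j)})) ` {..<Suc m} =
      insert (x m, {p m..p (Suc m)}) ((\<lambda>j. (x j, {p j..p (Suc j)})) ` {..<m})"
      by (auto simp: lessThan_Suc)
    have notin: "(x m, {p m..p (Suc m)}) \<notin> (\<lambda>j. (x j, {p j..p (Suc j)})) ` {..<m}"
    proof
      assume "(x m, {p m..p (Suc m)}) \<in> (\<lambda>j. (x j, {p j..p (Suc j)})) ` {..<m}"
      then obtain j where j: "j < m" "{p m..p (Suc m)} = {p j..p (Suc j)}" by auto
      have "p (Suc m) \<in> {p j..p (Suc j)}" using j(2) lt by auto
      moreover have "p (Suc j) \<le> p m" using mono[of "Suc j" m] j by auto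
      ultimately show False using lt by auto
    qed
    have un: "{p 0..p m} \<union> {p m..p (Suc m)} = {p 0..p (Suc m)}"
      using mono[of 0 m] lt by auto
    have "{(x m, {p m..p (Suc m)})} tagged_division_of {p m..p (Suc m)}"
      using Suc(3)[of m] by (auto intro: tagged_division_of_self_real)
    then have "(((\<lambda>j. (x j, {p j..p (Suc j)})) ` {..<m}) \<union> {(x m, {p m..p (Suc m)})})
       tagged_division_of ({p 0..p m} \<union> {p m..p (Suc m)})"
      using IH by (intro tagged_division_Un) auto
    then have td: "((\<lambda>j. (x j, {p j..p (Suc j)})) ` {..<Suc m}) tagged_division_of {p 0..p (Suc m)}"
      using eqs un by (metis Un_insert_right sup_bot.right_neutral)
    have "(\<Sum>(y,K)\<in>((\<lambda>j. (x j, {p j..p (Suc j)})) ` {..<Suc m}). Henstock_Kurzweil_Integration.content K * f y)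
       = Henstock_Kurzweil_Integration.content {p m..p (Suc m)} * f (x m) + (\<Sum>(y,K)\<in>((\<lambda>j. (x j, {p j..p (Suc j)})) ` {..<m}). Henstock_Kurzweil_Integration.content K * f y)"
      unfolding eqs by (subst sum.insert[OF _ notin]) auto
    also have "\<dots> = (\<Sum>j<Suc m. (p (Suc j) - p j) * f (x j))"
      using IH lt by simp
    finally show ?thesis using td by simp
  qed
qed


lemma fine_lemma:
  fixes p x :: "nat \<Rightarrow> real"
  assumes "\<And>j. j < m \<Longrightarrow> p (Suc j) - p j < \<delta>"
    and "\<And>j. j < m \<Longrightarrow> x j \<in> {p j..p (Suc j)}"
  shows "(\<lambda>y. ball y \<delta>) fine ((\<lambda>j. (x j, {p j..p (Suc j)})) ` {..<m})"
proof -
  have "{p j..p (Suc j)} \<subseteq> ball (x j) \<delta>" if j: "j < m" for j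
  proof
    fix z assume z: "z \<in> {p j..p (Suc j)}"
    have "p j \<le> x j" "x j \<le> p (Suc j)" using assms(2)[OF j] by auto
    then show "z \<in> ball (x j) \<delta>" using z assms(1)[OF j] by (auto simp: dist_real_def)
  qed
  then show ?thesis unfolding fine_def by auto
qed

lemma riemann_has_integral:
  assumes "riemann_integrable_on f a b"
  obtains I where "(f has_integral I) {a..b}"
    and "\<forall>e>0. \<exists>\<delta>>0. \<forall>D. D tagged_division_of {a..b} \<and> (\<lambda>x. ball x \<delta>) fine D \<longrightarrow>
        \<bar>(\<Sum>(x,K)\<in>D. Henstock_Kurzweil_Integration.content K * f x) - I\<bar> < e"
proof -
  obtain I where I: "\<forall>e>0. \<exists>\<delta>>0. \<forall>D. D tagged_division_of {a..b} \<and> (\<lambda>x. ball x \<delta>) fine D \<longrightarrow>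
        \<bar>(\<Sum>(x,K)\<in>D. Henstock_Kurzweil_Integration.content K * f x) - I\<bar> < e"
    using assms unfolding riemann_integrable_on_def by blast
  have "(f has_integral I) (cbox a b)"
    unfolding has_integral
  proof (intro allI impI)
    fix e :: real assume "e > 0"
    then obtain \<delta> where "\<delta> > 0" and d: "\<forall>D. D tagged_division_of {a..b} \<and> (\<lambda>x. ball x \<delta>) fine D \<longrightarrow>
        \<bar>(\<Sum>(x,K)\<in>D. Henstock_Kurzweil_Integration.content K * f x) - I\<bar> < e"
      using I by blast
    show "\<exists>\<gamma>. gauge \<gamma> \<and> (\<forall>\<D>. \<D> tagged_division_of cbox a b \<and> \<gamma> fine \<D> \<longrightarrow>
        norm ((\<Sum>(x, k)\<in>\<D>. Henstock_Kurzweil_Integration.content k *\<^sub>R f x) - I) < e)"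
      using d \<open>\<delta> > 0\<close> by (intro exI[of _ "\<lambda>x. ball x \<delta>"]) auto
  qed
  then show ?thesis using that I by simp
qed

lemma riemann_bounded:
  assumes "riemann_integrable_on f a b" "a < b"
  shows "\<exists>B. \<forall>t\<in>{a..b}. f t \<le> B"
proof -
  obtain I where I: "\<forall>e>0. \<exists>\<delta>>0. \<forall>D. D tagged_division_of {a..b} \<and> (\<lambda>x. ball x \<delta>) fine D \<longrightarrow>
        \<bar>(\<Sum>(x,K)\<in>D. Henstock_Kurzweil_Integration.content K * f x) - I\<bar> < e"
    using assms unfolding riemann_integrable_on_def by blast
  obtain \<delta> where "\<delta> > 0" and d: "\<And>D. D tagged_division_of {a..b} \<Longrightarrow> (\<lambda>x. ball x \<delta>) fine D \<Longrightarrow>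
        \<bar>(\<Sum>(x,K)\<in>D. Henstock_Kurzweil_Integration.content K * f x) - I\<bar> < 1"
    using I[rule_format, of 1] by auto
  define m :: nat where "m = nat \<lceil>(b - a) / \<delta>\<rceil> + 1"
  have m0: "0 < m" unfolding m_def by simp
  have "(b - a) / \<delta> < real m" unfolding m_def by linarith
  then have mpos: "real m > 0" and "b - a < real m * \<delta>" using \<open>\<delta> > 0\<close> m0 by (auto simp: field_simps)
  define h where "h = (b - a) / real m"
  have h0: "h > 0" and hd: "h < \<delta>" unfolding h_def using assms(2) mpos \<open>b - a < real m * \<delta>\<close>
    by (auto simp: field_simps)
  define p where "p j = a + real j * h" for j
  have p0: "p 0 = a" and pm: "p m = b" unfolding p_def h_def using mpos by auto
  have step: "p (Suc j) - p j = h" for j unfolding p_def by (simp add: algebra_simps)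
  have inc: "\<And>j. j < m \<Longrightarrow> p j < p (Suc j)" using step h0 by (smt (verit))
  define B where "B = (\<Sum>i<m. \<bar>f (p i)\<bar>) + 2 / h"
  have "f t \<le> B" if t: "t \<in> {a..b}" for t
  proof -
    have "\<exists>j<m. t \<in> {p j..p (Suc j)}"
    proof -
      define S where "S = {j. j \<le> m \<and> p j \<le> t}"
      have fin: "finite S" unfolding S_def by auto
      have "0 \<in> S" unfolding S_def using p0 t by auto
      define j0 where "j0 = Max S"
      have j0S: "j0 \<in> S" unfolding j0_def using fin \<open>0 \<in> S\<close> by (intro Max_in) auto
      show ?thesis
      proof (cases "j0 < m")
        case True
        have "Suc j0 \<notin> S" using fin j0_def by (metis Max_ge Suc_n_not_le_n)
        then have "t < p (Suc j0)" using True unfolding S_def by auto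
        then show ?thesis using True j0S unfolding S_def by (intro exI[of _ j0]) auto
      next
        case False
        then have "j0 = m" using j0S unfolding S_def by auto
        have "p (m - 1) \<le> p m" using inc[of "m - 1"] m0 by simp
        then show ?thesis using m0 \<open>j0 = m\<close> j0S t pm unfolding S_def
          by (intro exI[of _ "m - 1"]) auto
      qed
    qed
    then obtain j where j: "j < m" "t \<in> {p j..p (Suc j)}" by blast
    define x where "x i = (if i = j then t else p i)" for i
    have xin: "\<And>i. i < m \<Longrightarrow> x i \<in> {p i..p (Suc i)}" unfolding x_def using j inc
      by (auto simp: less_imp_le)
    have pin: "\<And>i. i < m \<Longrightarrow> p i \<in> {p i..p (Suc i)}" using inc by (auto simp: less_imp_le)
    have fine: "\<And>i. i < m \<Longrightarrow> p (Suc i) - p i < \<delta>" using step hd by simp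
    note D1 = div_lemma[where m=m and p=p and x=p and f=f, OF inc pin m0]
    note D2 = div_lemma[where m=m and p=p and x=x and f=f, OF inc xin m0]
    have s1: "\<bar>(\<Sum>i<m. (p (Suc i) - p i) * f (p i)) - I\<bar> < 1"
      using d[of "(\<lambda>i. (p i, {p i..p (Suc i)})) ` {..<m}"] D1 fine_lemma[where m=m and p=p and x=p, OF fine pin] p0 pm by auto
    have s2: "\<bar>(\<Sum>i<m. (p (Suc i) - p i) * f (x i)) - I\<bar> < 1"
      using d[of "(\<lambda>i. (x i, {p i..p (Suc i)})) ` {..<m}"] D2 fine_lemma[where m=m and p=p and x=x, OF fine xin] p0 pm by auto
    have "(\<Sum>i<m. (p (Suc i) - p i) * f (x i)) - (\<Sum>i<m. (p (Suc i) - p i) * f (p i))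
        = (\<Sum>i<m. (if i = j then h * (f t - f (p j)) else 0))"
      unfolding sum_subtractf[symmetric] by (intro sum.cong) (auto simp: x_def step algebra_simps)
    also have "\<dots> = h * (f t - f (p j))" using j by simp
    finally have "h * (f t - f (p j)) < 2" using s1 s2 by linarith
    then have "f t - f (p j) < 2 / h" using h0 by (simp add: field_simps)
    moreover have "\<bar>f (p j)\<bar> \<le> (\<Sum>i<m. \<bar>f (p i)\<bar>)"
      using j by (intro member_le_sum) auto
    ultimately show ?thesis unfolding B_def by linarith
  qed
  then show ?thesis by blast
qed



locale tauloc =
  fixes T :: real and \<theta> :: "real \<Rightarrow> 'a \<Rightarrow> real" and \<omega> :: 'a
  assumes Tpos: "T > 0" and pos: "\<And>t. t \<in> {0..T} \<Longrightarrow> \<theta> t \<omega> > 0"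
begin

lemma tau_range:
  shows "tau T \<theta> n \<omega> k \<in> {0..T}"
proof (induction k)
  case 0 then show ?case using Tpos by simp
next
  case (Suc k)
  have "\<theta> (tau T \<theta> n \<omega> k) \<omega> > 0" using pos Suc by auto
  then have "1 / (real n * \<theta> (tau T \<theta> n \<omega> k) \<omega>) \<ge> 0" by simp
  then show ?case using Suc Tpos pos by auto
qed

lemma tau_Suc_ge:
  shows "tau T \<theta> n \<omega> k \<le> tau T \<theta> n \<omega> (Suc k)"
proof -
  have "\<theta> (tau T \<theta> n \<omega> k) \<omega> > 0" using pos tau_range by auto
  then have "1 / (real n * \<theta> (tau T \<theta> n \<omega> k) \<omega>) \<ge> 0" by simp
  then show ?thesis using tau_range[of n k] by auto
qed

lemma tau_mono:
  assumes "i \<le> k"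
  shows "tau T \<theta> n \<omega> i \<le> tau T \<theta> n \<omega> k"
  using assms(1)
proof (induction k)
  case 0 then show ?case by simp
next
  case (Suc k)
  show ?case
  proof (cases "i = Suc k")
    case False
    then have "i \<le> k" using Suc by auto
    then show ?thesis using Suc.IH tau_Suc_ge[of n k] by (meson order_trans)
  qed simp
qed

lemma tau_Suc_eq:
  assumes "tau T \<theta> n \<omega> (Suc k) < T"
  shows "tau T \<theta> n \<omega> (Suc k) = tau T \<theta> n \<omega> k + 1 / (real n * \<theta> (tau T \<theta> n \<omega> k) \<omega>)"
  using assms by (auto simp: min_def split: if_splits)

lemma tau_Suc_gt:
  assumes "n > 0" "tau T \<theta> n \<omega> k < T"
  shows "tau T \<theta> n \<omega> k < tau T \<theta> n \<omega> (Suc k)"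
proof -
  have "\<theta> (tau T \<theta> n \<omega> k) \<omega> > 0" using pos tau_range by auto
  then have "1 / (real n * \<theta> (tau T \<theta> n \<omega> k) \<omega>) > 0" using assms(1) by simp
  then show ?thesis using assms(2) by auto
qed

lemma tau_lower:
  assumes "n > 0" "B > 0"
    and bnd: "\<And>k. \<theta> (tau T \<theta> n \<omega> k) \<omega> \<le> B"
  shows "tau T \<theta> n \<omega> k < T \<Longrightarrow> real k / (real n * B) \<le> tau T \<theta> n \<omega> k"
proof (induction k)
  case 0 then show ?case using Tpos by simp
next
  case (Suc k)
  have lt: "tau T \<theta> n \<omega> k < T" using Suc.prems tau_Suc_ge[of n k] by linarith
  have th: "\<theta> (tau T \<theta> n \<omega> k) \<omega> > 0" using pos tau_range by auto
  have "1 / (real n * B) \<le> 1 / (real n * \<theta> (tau T \<theta> n \<omega> k) \<omega>)"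
    using th bnd[of k] assms(1) by (intro divide_left_mono mult_left_mono) auto
  then have "real (Suc k) / (real n * B) \<le> tau T \<theta> n \<omega> k + 1 / (real n * \<theta> (tau T \<theta> n \<omega> k) \<omega>)"
    using Suc.IH[OF lt] by (simp add: add_divide_distrib)
  then show ?case using tau_Suc_eq[OF Suc.prems] by simp
qed

lemma N_props:
  assumes "n > 0" "B > 0"
    and bnd: "\<And>k. \<theta> (tau T \<theta> n \<omega> k) \<omega> \<le> B"
  shows "finite {k. tau T \<theta> n \<omega> k < T}"
    and "tau T \<theta> n \<omega> (Ncount T \<theta> n \<omega>) < T"
    and "tau T \<theta> n \<omega> (Suc (Ncount T \<theta> n \<omega>)) = T"
    and "\<And>k. k \<le> Ncount T \<theta> n \<omega> \<Longrightarrow> tau T \<theta> n \<omega> k < T"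
    and "real (Ncount T \<theta> n \<omega>) / real n \<le> T * B"
proof -
  let ?S = "{k. tau T \<theta> n \<omega> k < T}"
  have sub: "?S \<subseteq> {k. real k \<le> T * real n * B}"
  proof
    fix k assume "k \<in> ?S"
    then have "real k / (real n * B) \<le> tau T \<theta> n \<omega> k" using tau_lower[OF assms] by auto
    also have "\<dots> < T" using \<open>k \<in> ?S\<close> by auto
    finally show "k \<in> {k. real k \<le> T * real n * B}" using assms(1,2) by (auto simp: field_simps)
  qed
  have "finite {k. real k \<le> T * real n * B}"
    by (rule finite_subset[of _ "{..nat \<lceil>T * real n * B\<rceil>}"]) (auto, linarith)
  then show fin: "finite ?S" using sub finite_subset by blast
  have "0 \<in> ?S" using Tpos by simp
  then have NS: "Ncount T \<theta> n \<omega> \<in> ?S" unfolding Ncount_def using fin by (metis Max_in empty_iff)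
  then show "tau T \<theta> n \<omega> (Ncount T \<theta> n \<omega>) < T" by simp
  have "Suc (Ncount T \<theta> n \<omega>) \<notin> ?S" using fin unfolding Ncount_def
    by (metis Max_ge Suc_n_not_le_n)
  then show "tau T \<theta> n \<omega> (Suc (Ncount T \<theta> n \<omega>)) = T"
    using tau_range[of n "Suc (Ncount T \<theta> n \<omega>)"] by auto
  show "\<And>k. k \<le> Ncount T \<theta> n \<omega> \<Longrightarrow> tau T \<theta> n \<omega> k < T"
    using NS tau_mono by (meson le_less_trans mem_Collect_eq)
  have "real (Ncount T \<theta> n \<omega>) / (real n * B) < T"
    using NS tau_lower[OF assms, of "Ncount T \<theta> n \<omega>"] by auto
  then show "real (Ncount T \<theta> n \<omega>) / real n \<le> T * B"
    using assms(1,2) by (auto simp: field_simps)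
qed

lemma detA:
  assumes c: "c > 0" "\<And>t. t \<in> {0..T} \<Longrightarrow> c \<le> \<theta> t \<omega>"
    and R: "riemann_integrable_on (\<lambda>t. \<theta> t \<omega>) 0 T"
  shows "(\<lambda>n. real (Ncount T \<theta> n \<omega>) / real n) \<longlonglongrightarrow> integral {0..T} (\<lambda>t. \<theta> t \<omega>)"
proof -
  obtain B0 where B0: "\<forall>t\<in>{0..T}. \<theta> t \<omega> \<le> B0" using riemann_bounded[OF R Tpos] by blast
  define B where "B = max B0 1"
  have Bpos: "B > 0" unfolding B_def by simp
  have bnd: "\<And>n k. \<theta> (tau T \<theta> n \<omega> k) \<omega> \<le> B"
    using B0 tau_range unfolding B_def by (meson max.coboundedI1)
  obtain I where hasI: "((\<lambda>t. \<theta> t \<omega>) has_integral I) {0..T}"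
    and RI: "\<forall>e>0. \<exists>\<delta>>0. \<forall>D. D tagged_division_of {0..T} \<and> (\<lambda>x. ball x \<delta>) fine D \<longrightarrow>
        \<bar>(\<Sum>(x,K)\<in>D. Henstock_Kurzweil_Integration.content K * \<theta> x \<omega>) - I\<bar> < e"
    using riemann_has_integral[OF R] by blast
  have intI: "integral {0..T} (\<lambda>t. \<theta> t \<omega>) = I" using hasI by (rule integral_unique)
  show ?thesis unfolding intI lim_sequentially
  proof (intro allI impI)
    fix e :: real assume e: "e > 0"
    then obtain \<delta> where d0: "\<delta> > 0" and d: "\<And>D. D tagged_division_of {0..T} \<Longrightarrow> (\<lambda>x. ball x \<delta>) fine D \<Longrightarrow>
        \<bar>(\<Sum>(x,K)\<in>D. Henstock_Kurzweil_Integration.content K * \<theta> x \<omega>) - I\<bar> < e / 2"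
      using RI[rule_format, of "e/2"] by auto
    define n0 :: nat where "n0 = nat \<lceil>1 / (c * \<delta>) + 2 / e\<rceil> + 1"
    have n0a: "real n0 > 1 / (c * \<delta>)" and n0b: "real n0 > 2 / e" and n00: "n0 > 0"
    proof -
      have x: "real (nat \<lceil>1 / (c * \<delta>) + 2 / e\<rceil>) \<ge> 1 / (c * \<delta>) + 2 / e"
        by (rule real_nat_ceiling_ge)
      have "1 / (c * \<delta>) > 0" "2 / e > 0" using c d0 e by auto
      then show "real n0 > 1 / (c * \<delta>)" "real n0 > 2 / e" "n0 > 0"
      proof -
        have "real n0 = real (nat \<lceil>1 / (c * \<delta>) + 2 / e\<rceil>) + 1"
          by (simp only: n0_def of_nat_add of_nat_1)
        then show "real n0 > 1 / (c * \<delta>)" "real n0 > 2 / e" "n0 > 0"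
          using x \<open>1 / (c * \<delta>) > 0\<close> \<open>2 / e > 0\<close> unfolding n0_def by linarith+
      qed
    qed
    show "\<exists>no. \<forall>n\<ge>no. dist (real (Ncount T \<theta> n \<omega>) / real n) I < e"
    proof (intro exI allI impI)
      fix n assume nn: "n \<ge> n0"
      then have n0: "n > 0" using n00 by simp
      have rn: "real n > 1 / (c * \<delta>)" "real n > 2 / e" using n0a n0b nn
        by (smt (verit) of_nat_mono)+
      define N where "N = Ncount T \<theta> n \<omega>"
      note NP = N_props[OF n0 Bpos bnd, folded N_def]
      have inc: "\<And>j. j < Suc N \<Longrightarrow> tau T \<theta> n \<omega> j < tau T \<theta> n \<omega> (Suc j)"
        using NP(4) tau_Suc_gt[OF n0] by simp
      have tg: "\<And>j. j < Suc N \<Longrightarrow> tau T \<theta> n \<omega> j \<in> {tau T \<theta> n \<omega> j..tau T \<theta> n \<omega> (Suc j)}"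
        using inc by (auto simp: less_imp_le)
      note DL = div_lemma[where m="Suc N" and p="tau T \<theta> n \<omega>" and x="tau T \<theta> n \<omega>"
          and f="\<lambda>t. \<theta> t \<omega>", OF inc tg]
      have th: "\<And>j. \<theta> (tau T \<theta> n \<omega> j) \<omega> > 0" using pos tau_range by auto
      have small: "1 / (real n * \<theta> (tau T \<theta> n \<omega> j) \<omega>) < \<delta>" for j
      proof -
        have "c \<le> \<theta> (tau T \<theta> n \<omega> j) \<omega>" using c tau_range by auto
        then have "1 / (real n * \<theta> (tau T \<theta> n \<omega> j) \<omega>) \<le> 1 / (real n * c)"
          using c n0 by (intro divide_left_mono mult_left_mono) auto
        also have "\<dots> < \<delta>" using rn(1) c d0 n0 by (auto simp: field_simps)
        finally show ?thesis .
      qed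
      have fine: "\<And>j. j < Suc N \<Longrightarrow> tau T \<theta> n \<omega> (Suc j) - tau T \<theta> n \<omega> j < \<delta>"
        using small by (smt (verit, best) tau.simps(2))
      have F1: "\<bar>(\<Sum>j<Suc N. (tau T \<theta> n \<omega> (Suc j) - tau T \<theta> n \<omega> j) * \<theta> (tau T \<theta> n \<omega> j) \<omega>) - I\<bar> < e / 2"
        using d[OF _ fine_lemma[where m="Suc N" and p="tau T \<theta> n \<omega>" and x="tau T \<theta> n \<omega>", OF fine tg]]
          DL NP(3) by simp
      have F2: "(\<Sum>j<N. (tau T \<theta> n \<omega> (Suc j) - tau T \<theta> n \<omega> j) * \<theta> (tau T \<theta> n \<omega> j) \<omega>)
          = (\<Sum>j<N. 1 / real n)"
      proof (intro sum.cong refl)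
        fix j assume "j \<in> {..<N}"
        then have "tau T \<theta> n \<omega> (Suc j) < T" using NP(4)[of "Suc j"] by (simp del: tau.simps)
        then show "(tau T \<theta> n \<omega> (Suc j) - tau T \<theta> n \<omega> j) * \<theta> (tau T \<theta> n \<omega> j) \<omega> = 1 / real n"
        proof -
          have eq: "tau T \<theta> n \<omega> (Suc j) - tau T \<theta> n \<omega> j = 1 / (real n * \<theta> (tau T \<theta> n \<omega> j) \<omega>)"
            using tau_Suc_eq[OF \<open>tau T \<theta> n \<omega> (Suc j) < T\<close>] by linarith
          show ?thesis unfolding eq using th[of j] n0 by simp
        qed
      qed
      define r where "r = (T - tau T \<theta> n \<omega> N) * \<theta> (tau T \<theta> n \<omega> N) \<omega>"
      have F3: "0 < r" unfolding r_def using NP(2) th[of N] by simp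
      have F4: "r \<le> 1 / real n"
      proof -
        have "T \<le> tau T \<theta> n \<omega> N + 1 / (real n * \<theta> (tau T \<theta> n \<omega> N) \<omega>)"
          using NP(3) by (metis min.bounded_iff order_refl tau.simps(2))
        then have "r \<le> (1 / (real n * \<theta> (tau T \<theta> n \<omega> N) \<omega>)) * \<theta> (tau T \<theta> n \<omega> N) \<omega>"
          unfolding r_def using th[of N] by (intro mult_right_mono) auto
        then show ?thesis using th[of N] by simp
      qed
      have F5: "1 / real n < e / 2" using rn(2) e n0 by (auto simp: field_simps)
      have "(\<Sum>j<Suc N. (tau T \<theta> n \<omega> (Suc j) - tau T \<theta> n \<omega> j) * \<theta> (tau T \<theta> n \<omega> j) \<omega>)
          = real N / real n + r"
        using F2 NP(3) unfolding r_def by (simp del: tau.simps)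
      then have "\<bar>real N / real n + r - I\<bar> < e / 2" using F1 by simp
      then show "dist (real N / real n) I < e"
        using F3 F4 F5 unfolding dist_real_def abs_less_iff by linarith
    qed
  qed
qed

end


lemma conv_pt:
  assumes "T > 0" "\<And>t. t \<in> {0..T} \<Longrightarrow> \<theta> t \<omega> > 0"
    and "riemann_integrable_on (\<lambda>t. \<theta> t \<omega>) 0 T" "(INF t\<in>{0..T}. \<theta> t \<omega>) > 0"
  shows "(\<lambda>n. real (Ncount T \<theta> n \<omega>) / real n) \<longlonglongrightarrow> integral {0..T} (\<lambda>t. \<theta> t \<omega>)"
proof -
  interpret tauloc T \<theta> \<omega> using assms by unfold_locales auto
  have bdd: "bdd_below ((\<lambda>t. \<theta> t \<omega>) ` {0..T})"
    using assms(2) by (intro bdd_belowI[of _ 0]) (auto intro: less_imp_le)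
  show ?thesis
    by (rule detA[of "INF t\<in>{0..T}. \<theta> t \<omega>"]) (use assms bdd in \<open>auto intro: cINF_lower\<close>)
qed

lemma enn2real_le_self: "ennreal (enn2real x) \<le> x"
  by (cases "x = top") (auto simp: less_top)

lemma tau_meas:
  fixes M :: "'a measure" and \<theta> :: "real \<Rightarrow> 'a \<Rightarrow> real"
  assumes "T > 0"
    and meas: "(\<lambda>(t, \<omega>). \<theta> t \<omega>) \<in> borel_measurable (restrict_space lborel {0..T} \<Otimes>\<^sub>M M)"
    and pos: "\<And>t \<omega>. t \<in> {0..T} \<Longrightarrow> \<omega> \<in> space M \<Longrightarrow> \<theta> t \<omega> > 0"
  shows "(\<lambda>\<omega>. tau T \<theta> n \<omega> k) \<in> borel_measurable M"
    and "(\<lambda>\<omega>. \<theta> (tau T \<theta> n \<omega> k) \<omega>) \<in> borel_measurable M"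
proof -
  have rng: "\<And>\<omega> k. \<omega> \<in> space M \<Longrightarrow> tau T \<theta> n \<omega> k \<in> {0..T}"
  proof -
    fix \<omega> k assume "\<omega> \<in> space M"
    then interpret tauloc T \<theta> \<omega> using assms by unfold_locales auto
    show "tau T \<theta> n \<omega> k \<in> {0..T}" by (rule tau_range)
  qed
  have th: "(\<lambda>\<omega>. \<theta> (tau T \<theta> n \<omega> k) \<omega>) \<in> borel_measurable M"
    if tm: "(\<lambda>\<omega>. tau T \<theta> n \<omega> k) \<in> borel_measurable M" for k
  proof -
    have "(\<lambda>\<omega>. tau T \<theta> n \<omega> k) \<in> M \<rightarrow>\<^sub>M restrict_space lborel {0..T}"
      using tm rng by (intro measurable_restrict_space2) auto
    then have "(\<lambda>\<omega>. (tau T \<theta> n \<omega> k, \<omega>)) \<in> M \<rightarrow>\<^sub>M restrict_space lborel {0..T} \<Otimes>\<^sub>M M"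
      by (intro measurable_Pair) auto
    from measurable_compose[OF this meas] show ?thesis by simp
  qed
  have tm: "(\<lambda>\<omega>. tau T \<theta> n \<omega> k) \<in> borel_measurable M" for k
  proof (induction k)
    case 0 then show ?case by simp
  next
    case (Suc k)
    note [measurable] = Suc th[OF Suc]
    show ?case by simp measurable
  qed
  show "(\<lambda>\<omega>. tau T \<theta> n \<omega> k) \<in> borel_measurable M" by (rule tm)
  show "(\<lambda>\<omega>. \<theta> (tau T \<theta> n \<omega> k) \<omega>) \<in> borel_measurable M" by (rule th[OF tm])
qed

lemma section_facts:
  fixes M :: "'a measure" and \<theta> :: "real \<Rightarrow> 'a \<Rightarrow> real"
  assumes "T > 0"
    and meas: "(\<lambda>(t, \<omega>). \<theta> t \<omega>) \<in> borel_measurable (restrict_space lborel {0..T} \<Otimes>\<^sub>M M)"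
    and pos: "\<And>t. t \<in> {0..T} \<Longrightarrow> \<theta> t \<omega> > 0"
    and om: "\<omega> \<in> space M"
    and R: "riemann_integrable_on (\<lambda>t. \<theta> t \<omega>) 0 T"
  shows "integrable (restrict_space lborel {0..T}) (\<lambda>t. \<theta> t \<omega>)"
    and "integral {0..T} (\<lambda>t. \<theta> t \<omega>) = (\<integral>t. \<theta> t \<omega> \<partial>restrict_space lborel {0..T})"
proof -
  let ?R = "restrict_space lborel {0..T}"
  have fm: "finite_measure ?R"
    using \<open>T > 0\<close> by (intro finite_measureI) (simp add: emeasure_restrict_space space_restrict_space)
  have sm: "(\<lambda>t. \<theta> t \<omega>) \<in> borel_measurable ?R"
    using measurable_compose[OF measurable_Pair2'[OF om] meas] by simp
  obtain B0 where B0: "\<forall>t\<in>{0..T}. \<theta> t \<omega> \<le> B0" using riemann_bounded[OF R \<open>T > 0\<close>] by blast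
  have "AE t in ?R. norm (\<theta> t \<omega>) \<le> B0"
    using B0 pos by (intro AE_I2) (auto simp: space_restrict_space less_imp_le)
  then show int: "integrable ?R (\<lambda>t. \<theta> t \<omega>)"
    using sm by (intro finite_measure.integrable_const_bound[OF fm]) auto
  have si: "set_integrable lborel {0..T} (\<lambda>t. \<theta> t \<omega>)"
    using int unfolding set_integrable_def by (subst (asm) integrable_restrict_space) auto
  have "(\<integral>t. \<theta> t \<omega> \<partial>?R) = (LINT t:{0..T}|lborel. \<theta> t \<omega>)"
    unfolding set_lebesgue_integral_def by (subst integral_restrict_space) auto
  also have "\<dots> = integral {0..T} (\<lambda>t. \<theta> t \<omega>)" by (rule set_borel_integral_eq_integral(2)[OF si])
  finally show "integral {0..T} (\<lambda>t. \<theta> t \<omega>) = (\<integral>t. \<theta> t \<omega> \<partial>?R)" by simp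
qed

theorem proposition4p1:
  fixes M :: "'a measure" and F :: "real \<Rightarrow> 'a measure"
    and \<theta> :: "real \<Rightarrow> 'a \<Rightarrow> real" and T :: real
  assumes "prob_space M"
    and "filtration (space M) F" and "\<And>t. sets (F t) \<subseteq> sets M"
    and "T > 0"
    and "adapted_on T F \<theta>"
    and "(\<lambda>(t, \<omega>). \<theta> t \<omega>) \<in> borel_measurable (restrict_space lborel {0..T} \<Otimes>\<^sub>M M)"
    and "\<And>t \<omega>. t \<in> {0..T} \<Longrightarrow> \<omega> \<in> space M \<Longrightarrow> \<theta> t \<omega> > 0"
    and "AE \<omega> in M. riemann_integrable_on (\<lambda>t. \<theta> t \<omega>) 0 T"
    and "AE \<omega> in M. (INF t\<in>{0..T}. \<theta> t \<omega>) > 0"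
  shows "(AE \<omega> in M. (\<lambda>n. real (Ncount T \<theta> n \<omega>) / real n)
            \<longlonglongrightarrow> integral {0..T} (\<lambda>t. \<theta> t \<omega>)) \<and>
         ((\<integral>\<^sup>+\<omega>. (SUP t\<in>{0..T}. ennreal (\<theta> t \<omega>)) \<partial>M) < \<infinity> \<longrightarrow>
         (\<lambda>n. \<integral>\<omega>. real (Ncount T \<theta> n \<omega>) / real n \<partial>M)
            \<longlonglongrightarrow> integral {0..T} (\<lambda>t. \<integral>\<omega>. \<theta> t \<omega> \<partial>M))"
proof -
  interpret P: prob_space M by (rule assms(1))
  note Tpos = assms(4)
  note meas = assms(6)
  note pos = assms(7)
  let ?R = "restrict_space lborel {0..T}"
  have A1: "AE \<omega> in M. (\<lambda>n. real (Ncount T \<theta> n \<omega>) / real n)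
            \<longlonglongrightarrow> integral {0..T} (\<lambda>t. \<theta> t \<omega>)"
    using AE_space assms(8,9)
  proof eventually_elim
    case (elim \<omega>)
    then show ?case using conv_pt[of T \<theta> \<omega>] Tpos pos by blast
  qed
  have A2: "(\<lambda>n. \<integral>\<omega>. real (Ncount T \<theta> n \<omega>) / real n \<partial>M)
            \<longlonglongrightarrow> integral {0..T} (\<lambda>t. \<integral>\<omega>. \<theta> t \<omega> \<partial>M)"
    if G: "(\<integral>\<^sup>+\<omega>. (SUP t\<in>{0..T}. ennreal (\<theta> t \<omega>)) \<partial>M) < \<infinity>"
  proof -
    have fm: "finite_measure ?R"
      using Tpos by (intro finite_measureI) (simp add: emeasure_restrict_space space_restrict_space)
    then interpret R: finite_measure ?R .
    interpret PS: pair_sigma_finite ?R M by unfold_locales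
    note tm = tau_meas[OF Tpos meas pos]
    have Nm: "(\<lambda>\<omega>. real (Ncount T \<theta> n \<omega>) / real n) \<in> borel_measurable M" for n
    proof -
      have [measurable]: "\<And>k. (\<lambda>\<omega>. tau T \<theta> n \<omega> k) \<in> borel_measurable M" using tm(1) .
      have "(\<lambda>\<omega>. Ncount T \<theta> n \<omega>) \<in> M \<rightarrow>\<^sub>M count_space UNIV"
        unfolding Ncount_def by measurable
      then have "(\<lambda>\<omega>. real (Ncount T \<theta> n \<omega>)) \<in> borel_measurable M"
        by (rule measurable_compose) simp
      then show ?thesis by simp
    qed
    define H where "H \<omega> = (SUP nk\<in>UNIV. ennreal (\<theta> (tau T \<theta> (fst nk) \<omega> (snd nk)) \<omega>))" for \<omega>
    have Hm: "H \<in> borel_measurable M"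
      unfolding H_def using tm(2) by (intro borel_measurable_SUP) auto
    have HG: "H \<omega> \<le> (SUP t\<in>{0..T}. ennreal (\<theta> t \<omega>))" if "\<omega> \<in> space M" for \<omega>
    proof -
      interpret tauloc T \<theta> \<omega> using Tpos pos that by unfold_locales auto
      show ?thesis unfolding H_def
        by (intro SUP_least SUP_upper) (meson atLeastAtMost_iff tau_range)+
    qed
    have HI: "(\<integral>\<^sup>+\<omega>. H \<omega> \<partial>M) < \<infinity>"
      using G HG by (meson le_less_trans nn_integral_mono)
    have Hfin: "AE \<omega> in M. H \<omega> \<noteq> \<infinity>"
      using nn_integral_PInf_AE[OF Hm] HI by auto
    define w where "w \<omega> = T * (enn2real (H \<omega>) + 1)" for \<omega>
    have wint: "integrable M w"
    proof -
      have "integrable M (\<lambda>\<omega>. enn2real (H \<omega>))"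
      proof (rule integrableI_bounded)
        show "(\<lambda>\<omega>. enn2real (H \<omega>)) \<in> borel_measurable M" using Hm by measurable
        have "(\<integral>\<^sup>+\<omega>. ennreal (norm (enn2real (H \<omega>))) \<partial>M) \<le> (\<integral>\<^sup>+\<omega>. H \<omega> \<partial>M)"
          by (intro nn_integral_mono) (simp add: enn2real_le_self)
        then show "(\<integral>\<^sup>+\<omega>. ennreal (norm (enn2real (H \<omega>))) \<partial>M) < \<infinity>" using HI by simp
      qed
      then show ?thesis unfolding w_def by (intro integrable_mult_right integrable_add) auto
    qed
    have wm: "w \<in> borel_measurable M" using wint by auto
    have bound: "norm (real (Ncount T \<theta> n \<omega>) / real n) \<le> w \<omega>"
      if om: "\<omega> \<in> space M" and Hf: "H \<omega> \<noteq> \<infinity>" for n \<omega>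
    proof -
      interpret tauloc T \<theta> \<omega> using Tpos pos om by unfold_locales auto
      have w0: "0 \<le> w \<omega>" unfolding w_def using Tpos by auto
      show ?thesis
      proof (cases "n = 0")
        case True then show ?thesis using w0 by simp
      next
        case False
        have bnd: "\<theta> (tau T \<theta> n \<omega> k) \<omega> \<le> enn2real (H \<omega>) + 1" for k
        proof -
          have "ennreal (\<theta> (tau T \<theta> n \<omega> k) \<omega>) \<le> H \<omega>"
            unfolding H_def by (rule SUP_upper2[of "(n, k)"]) auto
          also have "\<dots> = ennreal (enn2real (H \<omega>))" using Hf by (simp add: less_top)
          finally show ?thesis by (simp add: ennreal_le_iff enn2real_nonneg)
        qed
        have "real (Ncount T \<theta> n \<omega>) / real n \<le> T * (enn2real (H \<omega>) + 1)"
        proof -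
          have p: "0 < enn2real (H \<omega>) + 1" by (simp add: add_nonneg_pos enn2real_nonneg)
          show ?thesis using N_props(5)[OF _ p bnd] False by simp
        qed
        then show ?thesis unfolding w_def by simp
      qed
    qed
    define L where "L \<omega> = (\<integral>t. \<theta> t \<omega> \<partial>?R)" for \<omega>
    have Lm: "L \<in> borel_measurable M"
    proof -
      have "(\<lambda>(\<omega>, t). \<theta> t \<omega>) \<in> borel_measurable (M \<Otimes>\<^sub>M ?R)"
        using meas by (subst measurable_pair_swap_iff) simp
      then show ?thesis unfolding L_def by (rule R.borel_measurable_lebesgue_integral[of "\<lambda>\<omega> t. \<theta> t \<omega>", simplified])
    qed
    have good: "AE \<omega> in M. \<omega> \<in> space M \<and> riemann_integrable_on (\<lambda>t. \<theta> t \<omega>) 0 T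
        \<and> (INF t\<in>{0..T}. \<theta> t \<omega>) > 0 \<and> H \<omega> \<noteq> \<infinity>"
      using AE_space assms(8,9) Hfin by eventually_elim auto
    have lim: "AE \<omega> in M. (\<lambda>n. real (Ncount T \<theta> n \<omega>) / real n) \<longlonglongrightarrow> L \<omega>"
      using good
    proof eventually_elim
      case (elim \<omega>)
      then have "integral {0..T} (\<lambda>t. \<theta> t \<omega>) = L \<omega>"
        unfolding L_def using section_facts(2)[OF Tpos meas, of \<omega>] pos by blast
      then show ?case using conv_pt[of T \<theta> \<omega>] Tpos pos elim by auto
    qed
    have LW: "AE \<omega> in M. L \<omega> \<le> w \<omega>"
      using lim good
    proof eventually_elim
      case (elim \<omega>)
      show ?case
        by (rule LIMSEQ_le_const2[OF elim(1)]) (use bound elim(2) in auto)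
    qed
    have DC: "(\<lambda>n. \<integral>\<omega>. real (Ncount T \<theta> n \<omega>) / real n \<partial>M) \<longlonglongrightarrow> (\<integral>\<omega>. L \<omega> \<partial>M)"
    proof -
      have bAE: "AE \<omega> in M. norm (real (Ncount T \<theta> n \<omega>) / real n) \<le> w \<omega>" for n
        using AE_space Hfin by eventually_elim (rule bound)
      show ?thesis by (rule integral_dominated_convergence[OF Lm Nm wint lim bAE])
    qed
    have intprod: "integrable (?R \<Otimes>\<^sub>M M) (\<lambda>(t, \<omega>). \<theta> t \<omega>)"
    proof (rule integrableI_bounded)
      show "(\<lambda>(t, \<omega>). \<theta> t \<omega>) \<in> borel_measurable (?R \<Otimes>\<^sub>M M)" by (rule meas)
      have "(\<integral>\<^sup>+x. ennreal (norm (case x of (t, \<omega>) \<Rightarrow> \<theta> t \<omega>)) \<partial>(?R \<Otimes>\<^sub>M M))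
          = (\<integral>\<^sup>+\<omega>. (\<integral>\<^sup>+t. ennreal (norm (\<theta> t \<omega>)) \<partial>?R) \<partial>M)"
      proof -
        have mm: "(\<lambda>x. ennreal (norm (case x of (t, \<omega>) \<Rightarrow> \<theta> t \<omega>))) \<in> borel_measurable (?R \<Otimes>\<^sub>M M)"
          using meas by measurable
        show ?thesis using PS.nn_integral_snd[OF mm] by simp
      qed
      also have "\<dots> \<le> (\<integral>\<^sup>+\<omega>. ennreal (w \<omega>) \<partial>M)"
      proof (rule nn_integral_mono_AE)
        show "AE \<omega> in M. (\<integral>\<^sup>+t. ennreal (norm (\<theta> t \<omega>)) \<partial>?R) \<le> ennreal (w \<omega>)"
          using good LW
        proof eventually_elim
          case (elim \<omega>)
          have int: "integrable ?R (\<lambda>t. \<theta> t \<omega>)"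
            using section_facts(1)[OF Tpos meas, of \<omega>] pos elim by blast
          have "(\<integral>\<^sup>+t. ennreal (norm (\<theta> t \<omega>)) \<partial>?R) = (\<integral>\<^sup>+t. ennreal (\<theta> t \<omega>) \<partial>?R)"
          proof (intro nn_integral_cong)
            fix t assume "t \<in> space ?R"
            then have "\<theta> t \<omega> > 0" using pos elim by (auto simp: space_restrict_space)
            then show "ennreal (norm (\<theta> t \<omega>)) = ennreal (\<theta> t \<omega>)" by simp
          qed
          also have "\<dots> = ennreal (L \<omega>)" unfolding L_def
            using int pos elim by (intro nn_integral_eq_integral AE_I2) (auto simp: space_restrict_space less_imp_le)
          also have "\<dots> \<le> ennreal (w \<omega>)" using elim by (simp add: ennreal_leI)
          finally show ?case .
        qed
      qed
      also have "\<dots> < \<infinity>"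
      proof -
        have "(\<integral>\<^sup>+\<omega>. ennreal (w \<omega>) \<partial>M) = ennreal (\<integral>\<omega>. w \<omega> \<partial>M)"
          using Tpos by (intro nn_integral_eq_integral[OF wint] AE_I2) (auto simp: w_def enn2real_nonneg)
        then show ?thesis by simp
      qed
      finally show "(\<integral>\<^sup>+x. ennreal (norm (case x of (t, \<omega>) \<Rightarrow> \<theta> t \<omega>)) \<partial>(?R \<Otimes>\<^sub>M M)) < \<infinity>" .
    qed
    have fub: "(\<integral>\<omega>. L \<omega> \<partial>M) = (\<integral>t. (\<integral>\<omega>. \<theta> t \<omega> \<partial>M) \<partial>?R)"
      unfolding L_def by (rule PS.Fubini_integral[of "\<lambda>t \<omega>. \<theta> t \<omega>"]) (use intprod in simp)
    have gint: "integrable ?R (\<lambda>t. \<integral>\<omega>. \<theta> t \<omega> \<partial>M)"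
      using PS.integrable_fst[of "\<lambda>t \<omega>. \<theta> t \<omega>"] intprod by simp
    have si: "set_integrable lborel {0..T} (\<lambda>t. \<integral>\<omega>. \<theta> t \<omega> \<partial>M)"
      using gint unfolding set_integrable_def by (subst (asm) integrable_restrict_space) auto
    have "(\<integral>t. (\<integral>\<omega>. \<theta> t \<omega> \<partial>M) \<partial>?R) = (LINT t:{0..T}|lborel. (\<integral>\<omega>. \<theta> t \<omega> \<partial>M))"
      unfolding set_lebesgue_integral_def by (subst integral_restrict_space) auto
    also have "\<dots> = integral {0..T} (\<lambda>t. \<integral>\<omega>. \<theta> t \<omega> \<partial>M)"
      by (rule set_borel_integral_eq_integral(2)[OF si])
    finally show ?thesis using DC fub by simp
  qed
  show ?thesis using A1 A2 by blast
qed

end
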